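(* Let $S$ be a $\mathcal{C}$-semigroup with $S\ne\mathcal{C}$ and genus $g$. Then $S$ is pseudo-symmetric if and only if $2g=1+\mathcal{F}(S)$ and $F(S)/2\in\mathbb{N}^p$.
   Context: An integer cone $\mathcal{C}\subseteq\mathbb{N}^p$ is the set of integer points of a finitely generated rational cone in $\mathbb{Q}_{\ge0}^p$. A $\mathcal{C}$-semigroup is a subset $S\subseteq\mathcal{C}$ containing $0$, closed under addition, with $\mathcal{C}\setminus S$ finite; $\mathcal{H}(S)=\mathcal{C}\setminus S$, $g=g(S)=\#\mathcal{H}(S)$. A monomial order $\preceq$ on $\mathbb{N}^p$ is fixed (total order, compatible with addition, $\mathbf 0\preceq\mathbf c$ for all $\mathbf c$), and $F(S)=\max_\preceq\mathcal{H}(S)$. $\mathrm{PF}(S)=\{\mathbf x\in\mathcal{H}(S)\mid \mathbf x+(S\setminus\{0\})\subseteq S\}$; $S$ is pseudo-symmetric if $\mathrm{PF}(S)=\{F(S),F(S)/2\}$. $\mathbf x\le_{\mathcal{C}}\mathbf y$ means $\mathbf y-\mathbf x\in\mathcal{C}$; $I_S(\mathbf n)=\{\mathbf s\in S\mid \mathbf s\le_{\mathcal{C}}\mathbf n\}$. The generalized Frobenius number is $\mathcal{F}(S)=\#I_S(F(S))+g(S)$. *)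

theory Defs
  imports "HOL-Analysis.Finite_Cartesian_Product"
begin

text \<open>Points of N^p are modelled as vectors of type nat^'n (p = CARD('n)).
  A rational point is of type rat^'n.\<close>

definition integer_cone :: "(nat ^ 'n) set \<Rightarrow> bool" where
  "integer_cone C \<longleftrightarrow>
     (\<exists>G :: (rat ^ 'n) set. finite G \<and> (\<forall>g\<in>G. \<forall>i. g $ i \<ge> 0) \<and>
        C = {x. \<exists>lam :: rat ^ 'n \<Rightarrow> rat. (\<forall>g\<in>G. lam g \<ge> 0) \<and>
                  (\<forall>i. of_nat (x $ i) = (\<Sum>g\<in>G. lam g * g $ i))})"

definition C_semigroup :: "(nat ^ 'n) set \<Rightarrow> (nat ^ 'n) set \<Rightarrow> bool" where
  "C_semigroup C S \<longleftrightarrow> integer_cone C \<and> S \<subseteq> C \<and> 0 \<in> S \<and>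
     (\<forall>a\<in>S. \<forall>b\<in>S. a + b \<in> S) \<and> finite (C - S)"

definition monomial_order :: "(nat ^ 'n \<Rightarrow> nat ^ 'n \<Rightarrow> bool) \<Rightarrow> bool" where
  "monomial_order le \<longleftrightarrow>
     (\<forall>x. le x x) \<and> (\<forall>x y z. le x y \<longrightarrow> le y z \<longrightarrow> le x z) \<and>
     (\<forall>x y. le x y \<longrightarrow> le y x \<longrightarrow> x = y) \<and> (\<forall>x y. le x y \<or> le y x) \<and>
     (\<forall>x y c. le x y \<longrightarrow> le (x + c) (y + c)) \<and> (\<forall>c. le 0 c)"

definition gaps :: "(nat ^ 'n) set \<Rightarrow> (nat ^ 'n) set \<Rightarrow> (nat ^ 'n) set" where
  "gaps C S = C - S"

definition genus :: "(nat ^ 'n) set \<Rightarrow> (nat ^ 'n) set \<Rightarrow> nat" where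
  "genus C S = card (gaps C S)"

definition frob :: "(nat ^ 'n \<Rightarrow> nat ^ 'n \<Rightarrow> bool) \<Rightarrow> (nat ^ 'n) set \<Rightarrow> (nat ^ 'n) set \<Rightarrow> nat ^ 'n" where
  "frob le C S = (THE x. x \<in> gaps C S \<and> (\<forall>y\<in>gaps C S. le y x))"

definition pseudo_frob :: "(nat ^ 'n) set \<Rightarrow> (nat ^ 'n) set \<Rightarrow> (nat ^ 'n) set" where
  "pseudo_frob C S = {x \<in> gaps C S. \<forall>s\<in>S - {0}. x + s \<in> S}"

definition pseudo_symmetric :: "(nat ^ 'n \<Rightarrow> nat ^ 'n \<Rightarrow> bool) \<Rightarrow> (nat ^ 'n) set \<Rightarrow> (nat ^ 'n) set \<Rightarrow> bool" where
  "pseudo_symmetric le C S \<longleftrightarrow>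
     (\<exists>h. h + h = frob le C S \<and> pseudo_frob C S = {frob le C S, h})"

definition cone_le :: "(nat ^ 'n) set \<Rightarrow> nat ^ 'n \<Rightarrow> nat ^ 'n \<Rightarrow> bool" where
  "cone_le C x y \<longleftrightarrow> (\<exists>c\<in>C. y = x + c)"

definition I_S :: "(nat ^ 'n) set \<Rightarrow> (nat ^ 'n) set \<Rightarrow> nat ^ 'n \<Rightarrow> (nat ^ 'n) set" where
  "I_S C S n = {s \<in> S. cone_le C s n}"

definition gen_frob :: "(nat ^ 'n \<Rightarrow> nat ^ 'n \<Rightarrow> bool) \<Rightarrow> (nat ^ 'n) set \<Rightarrow> (nat ^ 'n) set \<Rightarrow> nat" where
  "gen_frob le C S = card (I_S C S (frob le C S)) + genus C S"

end

theory Submission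
  imports Defs
begin

lemma vcancel: "(a::nat^'n) + x = b + x \<Longrightarrow> a = b"
  by (simp add: vec_eq_iff)

lemma vcancel2: "(x::nat^'n) + a = x + b \<Longrightarrow> a = b"
  by (simp add: vec_eq_iff)

lemma vminus: "(F::nat^'n) = s + c \<Longrightarrow> F - s = c"
  by (simp add: vec_eq_iff)

lemma vzero: "(x::nat^'n) + s = x \<Longrightarrow> s = 0"
  by (simp add: vec_eq_iff)

lemma cone_add:
  assumes "integer_cone C" "x \<in> C" "y \<in> C"
  shows "x + y \<in> C"
proof -
  obtain G :: "(rat^'a) set" where G: "finite G" "C = {x. \<exists>lam :: rat ^ 'a \<Rightarrow> rat. (\<forall>g\<in>G. lam g \<ge> 0) \<and>
                  (\<forall>i. of_nat (x $ i) = (\<Sum>g\<in>G. lam g * g $ i))}"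
    using assms(1) unfolding integer_cone_def by blast
  obtain l1 where l1: "\<forall>g\<in>G. l1 g \<ge> 0" "\<forall>i. of_nat (x $ i) = (\<Sum>g\<in>G. l1 g * g $ i)"
    using assms(2) G by blast
  obtain l2 where l2: "\<forall>g\<in>G. l2 g \<ge> 0" "\<forall>i. of_nat (y $ i) = (\<Sum>g\<in>G. l2 g * g $ i)"
    using assms(3) G by blast
  have "\<forall>g\<in>G. l1 g + l2 g \<ge> 0" using l1 l2 by auto
  moreover have "\<forall>i. of_nat ((x+y) $ i) = (\<Sum>g\<in>G. (l1 g + l2 g) * g $ i)"
    using l1 l2 by (simp add: distrib_right sum.distrib)
  ultimately show ?thesis
    by (subst G(2), intro CollectI exI[where x="\<lambda>g. l1 g + l2 g"]) blast
qed

lemma cone_half: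
  assumes "integer_cone C" "h + h \<in> C"
  shows "h \<in> C"
proof -
  obtain G :: "(rat^'a) set" where G: "finite G" "C = {x. \<exists>lam :: rat ^ 'a \<Rightarrow> rat. (\<forall>g\<in>G. lam g \<ge> 0) \<and>
                  (\<forall>i. of_nat (x $ i) = (\<Sum>g\<in>G. lam g * g $ i))}"
    using assms(1) unfolding integer_cone_def by blast
  obtain l1 where l1: "\<forall>g\<in>G. l1 g \<ge> 0" "\<forall>i. of_nat ((h+h) $ i) = (\<Sum>g\<in>G. l1 g * g $ i)"
    using assms(2) G by blast
  have "\<forall>g\<in>G. l1 g / 2 \<ge> 0" using l1 by auto
  moreover have "\<forall>i. of_nat (h $ i) = (\<Sum>g\<in>G. (l1 g / 2) * g $ i)"
  proof
    fix i
    have "(\<Sum>g\<in>G. (l1 g / 2) * g $ i) = (\<Sum>g\<in>G. l1 g * g $ i) / 2"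
      by (simp add: sum_divide_distrib)
    also have "\<dots> = of_nat (h $ i)" using l1(2)[rule_format, of i] by simp
    finally show "of_nat (h $ i) = (\<Sum>g\<in>G. (l1 g / 2) * g $ i)" by simp
  qed
  ultimately show ?thesis
    by (subst G(2), intro CollectI exI[where x="\<lambda>g. l1 g / 2"]) blast
qed

lemma max_exists:
  assumes mo: "monomial_order le" and "finite A" "A \<noteq> {}"
  shows "\<exists>x\<in>A. \<forall>y\<in>A. le y x"
  using assms(2,3)
proof (induction A rule: finite_ne_induct)
  case (singleton x)
  have "le x x" using mo unfolding monomial_order_def by blast
  then show ?case by simp
next
  case (insert a A)
  have tr: "\<And>x y z. le x y \<Longrightarrow> le y z \<Longrightarrow> le x z" and lin: "\<And>x y. le x y \<or> le y x"
    and rf: "\<And>x. le x x"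
    using mo unfolding monomial_order_def by blast+
  from insert obtain m where m: "m \<in> A" "\<forall>y\<in>A. le y m" by blast
  show ?case
  proof (cases "le m a")
    case True
    then have "\<forall>y\<in>insert a A. le y a" using m tr rf by blast
    then show ?thesis by blast
  next
    case False
    then have "le a m" using lin by blast
    then have "\<forall>y\<in>insert a A. le y m" using m by blast
    then show ?thesis using m by blast
  qed
qed

lemma frob_prop:
  assumes mo: "monomial_order le" and "finite (gaps C S)" "gaps C S \<noteq> {}"
  shows "frob le C S \<in> gaps C S \<and> (\<forall>y\<in>gaps C S. le y (frob le C S))"
proof -
  have anti: "\<And>x y. le x y \<Longrightarrow> le y x \<Longrightarrow> x = y" using mo unfolding monomial_order_def by blast
  obtain m where m: "m \<in> gaps C S" "\<forall>y\<in>gaps C S. le y m"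
    using max_exists[OF assms] by blast
  have "\<exists>!x. x \<in> gaps C S \<and> (\<forall>y\<in>gaps C S. le y x)"
  proof (rule ex1I[of _ m])
    show "m \<in> gaps C S \<and> (\<forall>y\<in>gaps C S. le y m)" using m by blast
    fix x assume x: "x \<in> gaps C S \<and> (\<forall>y\<in>gaps C S. le y x)"
    then have "le x m" "le m x" using m by auto
    then show "x = m" using anti by blast
  qed
  then show ?thesis unfolding frob_def by (rule theI')
qed

lemma vsum_pos:
  assumes "(s::nat^'n) \<noteq> 0"
  shows "(\<Sum>i\<in>UNIV. s $ i) > 0"
proof -
  obtain i where i: "s $ i \<noteq> 0" using assms by (auto simp: vec_eq_iff)
  have "s $ i \<le> (\<Sum>i\<in>UNIV. s $ i)" by (rule member_le_sum) auto
  then show ?thesis using i by simp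
qed

lemma vsum_add: "(\<Sum>i\<in>UNIV. ((x::nat^'n) + y) $ i) = (\<Sum>i\<in>UNIV. x $ i) + (\<Sum>i\<in>UNIV. y $ i)"
  by (simp add: sum.distrib)

theorem mainTheorem7:
  fixes C S :: "(nat ^ 'n) set" and le :: "nat ^ 'n \<Rightarrow> nat ^ 'n \<Rightarrow> bool"
  assumes "monomial_order le" and "C_semigroup C S" and "S \<noteq> C"
  shows "pseudo_symmetric le C S \<longleftrightarrow>
           (2 * genus C S = 1 + gen_frob le C S \<and> (\<forall>i. even (frob le C S $ i)))"
proof -
  have cone: "integer_cone C" and SC: "S \<subseteq> C" and S0: "0 \<in> S"
    and Sadd: "\<forall>a\<in>S. \<forall>b\<in>S. a + b \<in> S" and finG: "finite (gaps C S)"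
    using assms(2) unfolding C_semigroup_def gaps_def by auto
  have mo_refl: "\<And>x. le x x" and mo_anti: "\<And>x y. le x y \<Longrightarrow> le y x \<Longrightarrow> x = y"
    and mo_comp: "\<And>x y c. le x y \<Longrightarrow> le (x + c) (y + c)" and mo_0: "\<And>c. le 0 c"
    using assms(1) unfolding monomial_order_def by auto
  define G where "G = gaps C S"
  have GI: "\<And>x. x \<in> G \<longleftrightarrow> x \<in> C \<and> x \<notin> S" unfolding G_def gaps_def by auto
  have Gne: "G \<noteq> {}" using SC assms(3) GI by blast
  define F where "F = frob le C S"
  have FG: "F \<in> G" and Fmax: "\<forall>y\<in>G. le y F"
    using frob_prop[OF assms(1) finG] Gne unfolding G_def F_def by auto
  have FC: "F \<in> C" and FS: "F \<notin> S" using FG GI by auto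
  have Fplus: "\<And>s. s \<in> S \<Longrightarrow> s \<noteq> 0 \<Longrightarrow> F + s \<in> S"
  proof (rule ccontr)
    fix s assume s: "s \<in> S" "s \<noteq> 0" "F + s \<notin> S"
    have "F + s \<in> C" using cone_add[OF cone FC] s SC by auto
    then have "F + s \<in> G" using GI s by auto
    then have "le (F + s) F" using Fmax by auto
    moreover have "le F (F + s)" using mo_comp[OF mo_0[of s], of F] by (simp add: add.commute)
    ultimately have "F + s = F" using mo_anti by blast
    then show False using vzero s by blast
  qed
  define I where "I = I_S C S F"
  have II: "\<And>s. s \<in> I \<longleftrightarrow> s \<in> S \<and> (\<exists>c\<in>C. F = s + c)"
    unfolding I_def I_S_def cone_le_def by auto
  have phiG: "\<And>s. s \<in> I \<Longrightarrow> F - s \<in> G \<and> s + (F - s) = F"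
  proof -
    fix s assume "s \<in> I"
    then obtain c where c: "s \<in> S" "c \<in> C" "F = s + c" using II by blast
    then have "F - s = c" using vminus by blast
    moreover have "c \<notin> S" using c Sadd FS by auto
    ultimately show "F - s \<in> G \<and> s + (F - s) = F" using c GI by auto
  qed
  have inj: "inj_on (\<lambda>s. F - s) I"
  proof (rule inj_onI)
    fix s t assume st: "s \<in> I" "t \<in> I" "F - s = F - t"
    then have "s + (F - s) = t + (F - s)" using phiG by metis
    then show "s = t" using vcancel by blast
  qed
  have finI: "finite I"
    using finite_imageD[OF finite_subset[OF _ finG] inj] phiG unfolding G_def by blast
  have gen: "gen_frob le C S = card I + card G"
    unfolding gen_frob_def genus_def I_def F_def G_def by simp
  have genus: "genus C S = card G" unfolding genus_def G_def by simp
  have common: "\<And>h. h + h = F \<Longrightarrow>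
     h \<in> G \<and> (2 * card G = 1 + (card I + card G) \<longleftrightarrow> G = (\<lambda>s. F - s) ` I \<union> {h})"
  proof -
    fix h assume hh: "h + h = F"
    have "h + h \<in> C" using hh FC by simp
    then have hC: "h \<in> C" using cone_half[OF cone] by blast
    have hS: "h \<notin> S"
    proof
      assume "h \<in> S"
      then have "h + h \<in> S" using Sadd by blast
      then show False using hh FS by simp
    qed
    have hG: "h \<in> G" using hC hS GI by blast
    have hnot: "h \<notin> (\<lambda>s. F - s) ` I"
    proof
      assume "h \<in> (\<lambda>s. F - s) ` I"
      then obtain s where s: "s \<in> I" "h = F - s" by blast
      then have "s + h = F" using phiG by blast
      then have "s + h = h + h" using hh by simp
      then have "s = h" using vcancel by blast
      then show False using s(1) II hS by blast
    qed
    define A where "A = (\<lambda>s. F - s) ` I \<union> {h}"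
    have AG: "A \<subseteq> G" using phiG hG unfolding A_def by blast
    have finA: "finite ((\<lambda>s. F - s) ` I)" using finI by blast
    have "card A = card ((\<lambda>s. F - s) ` I) + 1"
      unfolding A_def using hnot finA by simp
    then have cardA: "card A = card I + 1" using card_image[OF inj] by simp
    have "2 * card G = 1 + (card I + card G) \<longleftrightarrow> card A = card G" using cardA by linarith
    also have "\<dots> \<longleftrightarrow> A = G"
    proof
      assume "card A = card G"
      moreover have "finite G" using finG G_def by simp
      ultimately show "A = G" using card_subset_eq AG by blast
    qed simp
    finally show "h \<in> G \<and> (2 * card G = 1 + (card I + card G) \<longleftrightarrow> G = (\<lambda>s. F - s) ` I \<union> {h})"
      using hG unfolding A_def by blast
  qed
  have PFI: "\<And>x. x \<in> pseudo_frob C S \<longleftrightarrow> x \<in> G \<and> (\<forall>s\<in>S - {0}. x + s \<in> S)"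
    unfolding pseudo_frob_def G_def by auto
  have keyPF: "\<And>x. x \<in> G \<Longrightarrow> \<exists>f\<in>pseudo_frob C S. \<exists>s\<in>S. f = x + s"
  proof -
    fix x assume xG: "x \<in> G"
    define B where "B = {y\<in>G. \<exists>s\<in>S. y = x + s}"
    define mu where "mu = (\<lambda>y::nat^'n. \<Sum>i\<in>UNIV. y $ i)"
    have finB: "finite B" using finG unfolding B_def G_def by auto
    have xB: "x \<in> B" using xG S0 unfolding B_def by force
    have "Max (mu ` B) \<in> mu ` B" using finB xB by (intro Max_in) auto
    then obtain y where yB: "y \<in> B" and ymax: "mu y = Max (mu ` B)" by auto
    have "y \<in> pseudo_frob C S"
      unfolding PFI
    proof (intro conjI ballI)
      show "y \<in> G" using yB B_def by auto
      fix s assume s: "s \<in> S - {0}"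
      show "y + s \<in> S"
      proof (rule ccontr)
        assume ns: "y + s \<notin> S"
        have "y + s \<in> C" using cone_add[OF cone] yB s SC GI unfolding B_def by auto
        then have "y + s \<in> G" using ns GI by auto
        moreover obtain s0 where "s0 \<in> S" "y = x + s0" using yB B_def by auto
        ultimately have "y + s \<in> B" using s Sadd unfolding B_def
          by (metis (mono_tags, lifting) DiffD1 add.assoc mem_Collect_eq)
        then have "mu (y + s) \<le> mu y" using ymax finB by simp
        moreover have "mu (y + s) = mu y + mu s" unfolding mu_def by (rule vsum_add)
        moreover have "mu s > 0" using s vsum_pos unfolding mu_def by auto
        ultimately show False by simp
      qed
    qed
    then show "\<exists>f\<in>pseudo_frob C S. \<exists>s\<in>S. f = x + s" using yB B_def by auto
  qed
  show ?thesis
  proof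
    assume "pseudo_symmetric le C S"
    then obtain h where hh: "h + h = F" and PF: "pseudo_frob C S = {F, h}"
      unfolding pseudo_symmetric_def F_def by blast
    have ev: "\<forall>i. even (F $ i)"
    proof
      fix i have "F $ i = h $ i + h $ i" using hh by (metis vector_add_component)
      then show "even (F $ i)" by simp
    qed
    have hPF: "h \<in> pseudo_frob C S" using PF by auto
    have "G \<subseteq> (\<lambda>s. F - s) ` I \<union> {h}"
    proof
      fix x assume xG: "x \<in> G"
      then obtain f s where f: "f \<in> pseudo_frob C S" "s \<in> S" "f = x + s" using keyPF by blast
      have xC: "x \<in> C" using xG GI by auto
      show "x \<in> (\<lambda>s. F - s) ` I \<union> {h}"
      proof (cases "f = F")
        case True
        then have "s \<in> I" using II f xC by (auto simp: add.commute)
        moreover have "F = s + x" using True f by (simp add: add.commute)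
        then have "F - s = x" by (rule vminus)
        ultimately show ?thesis by auto
      next
        case False
        then have fh: "f = h" using f PF by auto
        show ?thesis
        proof (cases "s = 0")
          case True then show ?thesis using f fh by simp
        next
          case False
          then have hs: "h + s \<in> S" using hPF f PFI by auto
          have "F = (s + h) + x" using hh fh f by (simp add: add.commute add.left_commute)
          then have "s + h \<in> I" "F - (s + h) = x" using II hs xC vminus by (auto simp: add.commute)
          then show ?thesis by force
        qed
      qed
    qed
    moreover have "(\<lambda>s. F - s) ` I \<union> {h} \<subseteq> G" using phiG common[OF hh] by auto
    ultimately have "G = (\<lambda>s. F - s) ` I \<union> {h}" by blast
    then show "2 * genus C S = 1 + gen_frob le C S \<and> (\<forall>i. even (frob le C S $ i))"
      using common[OF hh] gen genus ev F_def by auto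
  next
    assume asm: "2 * genus C S = 1 + gen_frob le C S \<and> (\<forall>i. even (frob le C S $ i))"
    define h where "h = (\<chi> i. F $ i div 2)"
    have hh: "h + h = F"
    proof -
      have "\<forall>i. even (F $ i)" using asm F_def by simp
      then show ?thesis unfolding h_def
        by (simp add: vec_eq_iff) (metis dvd_mult_div_cancel mult_2)
    qed
    have GA: "G = (\<lambda>s. F - s) ` I \<union> {h}" using common[OF hh] asm gen genus by auto
    have hG: "h \<in> G" using common[OF hh] by auto
    have hS: "h \<notin> S" using hG GI by auto
    have "pseudo_frob C S = {F, h}"
    proof (intro equalityI subsetI)
      fix x assume x: "x \<in> pseudo_frob C S"
      then have xG: "x \<in> G" using PFI by auto
      show "x \<in> {F, h}"
      proof (cases "x = h")
        case False
        then obtain t where t: "t \<in> I" "x = F - t" using xG GA by auto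
        have tx: "x + t = F" using phiG[OF t(1)] t(2) by (simp add: add.commute)
        show ?thesis
        proof (cases "t = 0")
          case True then show ?thesis using tx by simp
        next
          case False
          then have "x + t \<in> S" using x PFI t II by auto
          then show ?thesis using tx FS by simp
        qed
      qed simp
    next
      fix x assume "x \<in> {F, h}"
      then consider "x = F" | "x = h" by blast
      then show "x \<in> pseudo_frob C S"
      proof cases
        case 1 then show ?thesis using FG Fplus PFI by auto
      next
        case 2
        have "\<forall>s\<in>S - {0}. h + s \<in> S"
        proof
          fix s assume s: "s \<in> S - {0}"
          show "h + s \<in> S"
          proof (rule ccontr)
            assume ns: "h + s \<notin> S"
            have "h + s \<in> C" using cone_add[OF cone] hG s SC GI by auto
            then have "h + s \<in> G" using ns GI by auto
            moreover have "h + s \<noteq> h" using s vzero by blast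
            ultimately obtain t where t: "t \<in> I" "h + s = F - t" using GA by auto
            have "t + (h + s) = h + h" using phiG[OF t(1)] t(2) hh by simp
            then have "(t + s) + h = h + h" by (simp add: ac_simps)
            then have "t + s = h" using vcancel by blast
            moreover have "t + s \<in> S" using t II s Sadd by auto
            ultimately show False using hS by simp
          qed
        qed
        then show ?thesis using 2 hG PFI by auto
      qed
    qed
    then show "pseudo_symmetric le C S" unfolding pseudo_symmetric_def F_def[symmetric]
      using hh by blast
  qed
qed

end
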